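(* Let $n\in\mathbb{N}$, let $f\colon[0,1]^n\to[0,1]$ be an aggregation function, and let $\mathbf{a}=(a_0,\dots,a_{n-1})\in[0,1]^n$ with $\mathbf{a}\neq(0,\dots,0)$ and $\mathbf{a}\neq(1,\dots,1)$. Put $J_{\mathbf{a}}=\{i: a_i\neq0\}$ and define $h^f_{\mathbf{a}}(\mathbf{x})=G^n_{f(\mathbf{a})}(\mathbf{x})\wedge\bigwedge_{i\in J_{\mathbf{a}}}\chi_{a_i}(x_i)$. Then $h^f_{\mathbf{a}}$ is an aggregation function and for all $\mathbf{x}\in[0,1]^n$: $h^f_{\mathbf{a}}(\mathbf{x})=1$ if $\mathbf{x}=(1,\dots,1)$; $h^f_{\mathbf{a}}(\mathbf{x})=f(\mathbf{a})$ if $\mathbf{x}\ge\mathbf{a}$ (coordinatewise) and $\mathbf{x}\neq(1,\dots,1)$; and $h^f_{\mathbf{a}}(\mathbf{x})=0$ if $\mathbf{x}\not\ge\mathbf{a}$.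
   Context: An $n$-ary aggregation function on $[0,1]$ is a function $f\colon[0,1]^n\to[0,1]$ nondecreasing in each coordinate with $f(0,\dots,0)=0$ and $f(1,\dots,1)=1$. For $a\in[0,1]$, $\chi_a(x)=1$ if $x\ge a$ and $x\neq0$, and $\chi_a(x)=0$ otherwise. $\mathsf{Med}_b(x,y)$ is the median of $x,y,b$. For $b\in[0,1]$, $G^n_b\colon[0,1]^n\to[0,1]$ is defined inductively by $G^1_b(x_0)=\mathsf{Med}_b(\chi_0(x_0),\chi_1(x_0))$, $G^2_b(x_0,x_1)=\mathsf{Med}_b(\chi_0(x_0\vee x_1),\chi_1(x_0\wedge x_1))$, $G^{n+1}_b(x_0,\dots,x_n)=G^2_b(G^n_b(x_0,\dots,x_{n-1}),x_n)$ for $n\ge2$. *)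

theory Defs
  imports Main "HOL.Real"
begin

text \<open>Points of [0,1]^n are represented as real lists of length n (indices 0..n-1).\<close>

definition cube :: "nat \<Rightarrow> real list set" where
  "cube n = {x. length x = n \<and> set x \<subseteq> {0..1}}"

definition vle :: "real list \<Rightarrow> real list \<Rightarrow> bool" where
  "vle x y = list_all2 (\<le>) x y"

definition is_aggregation :: "nat \<Rightarrow> (real list \<Rightarrow> real) \<Rightarrow> bool" where
  "is_aggregation n f \<longleftrightarrow>
     (\<forall>x\<in>cube n. f x \<in> {0..1}) \<and>
     (\<forall>x\<in>cube n. \<forall>y\<in>cube n. vle x y \<longrightarrow> f x \<le> f y) \<and>
     f (replicate n 0) = 0 \<and> f (replicate n 1) = 1"

definition chi :: "real \<Rightarrow> real \<Rightarrow> real" where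
  "chi a x = (if x \<ge> a \<and> x \<noteq> 0 then 1 else 0)"

definition Med :: "real \<Rightarrow> real \<Rightarrow> real \<Rightarrow> real" where
  "Med b x y = max (min x y) (min (max x y) b)"

definition G1 :: "real \<Rightarrow> real \<Rightarrow> real" where
  "G1 b x0 = Med b (chi 0 x0) (chi 1 x0)"

definition G2 :: "real \<Rightarrow> real \<Rightarrow> real \<Rightarrow> real" where
  "G2 b x0 x1 = Med b (chi 0 (max x0 x1)) (chi 1 (min x0 x1))"

text \<open>G^n_b on a list of length n \<ge> 1:
  G^1 = G1, G^2 = G2, G^{n+1}(x_0..x_n) = G2 (G^n(x_0..x_{n-1})) x_n.\<close>
definition Gn :: "real \<Rightarrow> real list \<Rightarrow> real" where
  "Gn b xs = (if length xs = 1 then G1 b (xs ! 0)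
              else foldl (G2 b) (G2 b (xs ! 0) (xs ! 1)) (drop 2 xs))"

definition hfa :: "(real list \<Rightarrow> real) \<Rightarrow> real list \<Rightarrow> real list \<Rightarrow> real" where
  "hfa f a x = Min (insert (Gn (f a) x) {chi (a ! i) (x ! i) | i. i < length a \<and> a ! i \<noteq> 0})"

end

theory Submission
  imports Defs
begin

definition V :: "real \<Rightarrow> real list \<Rightarrow> real" where
  "V b L = (if \<forall>x\<in>set L. x = 0 then 0 else if \<forall>x\<in>set L. x = 1 then 1 else b)"

lemma G2_V:
  assumes "L \<noteq> []" "set L \<subseteq> {0..1}" "0 \<le> y" "y \<le> 1" "0 \<le> b" "b \<le> 1"
  shows "G2 b (V b L) y = V b (L @ [y])"
proof -
  obtain z where z: "z \<in> set L" using assms(1) by (cases L) auto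
  have z01: "0 \<le> z" "z \<le> 1" using z assms(2) by auto
  have nb: "\<not> ((\<forall>x\<in>set L. x = 0) \<and> (\<forall>x\<in>set L. x = 1))" using z by force
  show ?thesis
    using assms z z01 nb
    by (cases "\<forall>x\<in>set L. x = 0"; cases "\<forall>x\<in>set L. x = 1"; cases "y = 0"; cases "y = 1")
       (auto simp: V_def G2_def Med_def chi_def max_def min_def)
qed

lemma foldl_V:
  assumes "L \<noteq> []" "set L \<subseteq> {0..1}" "set ys \<subseteq> {0..1}" "0 \<le> b" "b \<le> 1"
  shows "foldl (G2 b) (V b L) ys = V b (L @ ys)"
  using assms
proof (induction ys arbitrary: L)
  case Nil
  then show ?case by simp
next
  case (Cons y ys)
  have "G2 b (V b L) y = V b (L @ [y])" using Cons.prems by (intro G2_V) auto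
  then have "foldl (G2 b) (V b L) (y # ys) = foldl (G2 b) (V b (L @ [y])) ys" by simp
  also have "\<dots> = V b ((L @ [y]) @ ys)" using Cons.prems by (intro Cons.IH) auto
  finally show ?case by simp
qed

lemma Gn_V:
  assumes "xs \<noteq> []" "set xs \<subseteq> {0..1}" "0 \<le> b" "b \<le> 1"
  shows "Gn b xs = V b xs"
proof (cases xs)
  case Nil then show ?thesis using assms by simp
next
  case (Cons x0 r)
  show ?thesis
  proof (cases r)
    case Nil
    then show ?thesis using Cons assms
      by (auto simp: Gn_def G1_def V_def Med_def chi_def max_def min_def)
  next
    case (Cons x1 rest)
    have x: "0 \<le> x0" "x0 \<le> 1" "0 \<le> x1" "x1 \<le> 1" using assms \<open>xs = x0 # r\<close> Cons by auto
    have "G2 b x0 x1 = V b [x0, x1]"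
      using x assms(3,4)
      by (cases "x0 = 0"; cases "x0 = 1"; cases "x1 = 0"; cases "x1 = 1")
         (auto simp: V_def G2_def Med_def chi_def max_def min_def)
    then have "Gn b xs = foldl (G2 b) (V b [x0, x1]) rest"
      using \<open>xs = x0 # r\<close> Cons by (simp add: Gn_def)
    also have "\<dots> = V b ([x0, x1] @ rest)"
      using assms \<open>xs = x0 # r\<close> Cons by (intro foldl_V) auto
    finally show ?thesis using \<open>xs = x0 # r\<close> Cons by simp
  qed
qed

theorem lemma2:
  fixes n :: nat and f :: "real list \<Rightarrow> real" and a :: "real list"
  assumes "is_aggregation n f"
    and "a \<in> cube n"
    and "a \<noteq> replicate n 0"
    and "a \<noteq> replicate n 1"
  shows "is_aggregation n (hfa f a) \<and>
    (\<forall>x\<in>cube n.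
       (x = replicate n 1 \<longrightarrow> hfa f a x = 1) \<and>
       (vle a x \<and> x \<noteq> replicate n 1 \<longrightarrow> hfa f a x = f a) \<and>
       (\<not> vle a x \<longrightarrow> hfa f a x = 0))"
proof -
  have la: "length a = n" and a01: "set a \<subseteq> {0..1}" using assms(2) by (auto simp: cube_def)
  have n0: "n \<noteq> 0" using assms(3) la by auto
  have fa: "0 \<le> f a" "f a \<le> 1" using assms(1,2) by (auto simp: is_aggregation_def)
  define b where "b = f a"
  have b: "0 \<le> b" "b \<le> 1" using fa b_def by auto
  have key: "hfa f a x = (if vle a x then V b x else 0)" if x: "x \<in> cube n" for x
  proof -
    have lx: "length x = n" and x01: "set x \<subseteq> {0..1}" using x by (auto simp: cube_def)
    have xne: "x \<noteq> []" using lx n0 by auto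
    have G: "Gn (f a) x = V b x" using Gn_V[OF xne x01 b] b_def by simp
    have V01: "0 \<le> V b x" "V b x \<le> 1" using b by (auto simp: V_def)
    define S where "S = {chi (a ! i) (x ! i) | i. i < length a \<and> a ! i \<noteq> 0}"
    have "S = (\<lambda>i. chi (a ! i) (x ! i)) ` {i. i < length a \<and> a ! i \<noteq> 0}"
      unfolding S_def by auto
    then have fS: "finite S" by simp
    have hd: "hfa f a x = Min (insert (V b x) S)" unfolding hfa_def S_def G by simp
    show ?thesis
    proof (cases "vle a x")
      case True
      have "\<forall>s\<in>S. s = 1"
      proof
        fix s assume "s \<in> S"
        then obtain i where i: "i < length a" "a ! i \<noteq> 0" "s = chi (a ! i) (x ! i)"
          unfolding S_def by auto
        have "a ! i \<le> x ! i" using True i la lx by (auto simp: vle_def list_all2_conv_all_nth)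
        moreover have "0 \<le> a ! i" using a01 i nth_mem by fastforce
        ultimately show "s = 1" using i by (auto simp: chi_def)
      qed
      then have "Min (insert (V b x) S) = V b x"
        using fS V01 by (intro Min_eqI) auto
      then show ?thesis using True hd by simp
    next
      case False
      then obtain i where i: "i < n" "\<not> a ! i \<le> x ! i"
        using la lx by (auto simp: vle_def list_all2_conv_all_nth)
      have "0 \<le> x ! i" using x01 i lx nth_mem by fastforce
      then have "a ! i \<noteq> 0" "chi (a ! i) (x ! i) = 0" using i by (auto simp: chi_def)
      then have "0 \<in> S" unfolding S_def using i la by force
      have "\<forall>s\<in>S. 0 \<le> s" unfolding S_def by (auto simp: chi_def)
      then have "Min (insert (V b x) S) = 0"
        using fS V01 \<open>0 \<in> S\<close> by (intro Min_eqI) auto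
      then show ?thesis using False hd by simp
    qed
  qed
  have one_cube: "replicate n 1 \<in> cube n" and zero_cube: "replicate n 0 \<in> cube n"
    by (auto simp: cube_def)
  have vle1: "vle a (replicate n 1)" using a01 la nth_mem
    by (fastforce simp: vle_def list_all2_conv_all_nth)
  have V1: "V b (replicate n 1) = 1" using n0 by (auto simp: V_def)
  have nvle0: "\<not> vle a (replicate n 0)"
  proof
    assume "vle a (replicate n 0)"
    then have "\<forall>i<n. a ! i \<le> 0" using la by (auto simp: vle_def list_all2_conv_all_nth)
    moreover have "\<forall>i<n. 0 \<le> a ! i" using a01 la nth_mem by fastforce
    ultimately have "a = replicate n 0" using la by (intro nth_equalityI) force+
    then show False using assms(3) by simp
  qed
  have Vb: "V b x = b" if "x \<in> cube n" "vle a x" "x \<noteq> replicate n 1" for x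
  proof -
    have lx: "length x = n" using that by (auto simp: cube_def)
    have n1: "\<not> (\<forall>y\<in>set x. y = 1)"
    proof
      assume "\<forall>y\<in>set x. y = 1"
      then have "x = replicate n 1" using lx by (metis replicate_length_same)
      then show False using that by simp
    qed
    have n0': "\<not> (\<forall>y\<in>set x. y = 0)"
    proof
      assume "\<forall>y\<in>set x. y = 0"
      then have "x = replicate n 0" using lx by (metis replicate_length_same)
      then show False using that nvle0 by simp
    qed
    show ?thesis unfolding V_def using n1 n0' by presburger
  qed
  have vals: "\<forall>x\<in>cube n.
       (x = replicate n 1 \<longrightarrow> hfa f a x = 1) \<and>
       (vle a x \<and> x \<noteq> replicate n 1 \<longrightarrow> hfa f a x = f a) \<and>
       (\<not> vle a x \<longrightarrow> hfa f a x = 0)"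
    using key Vb vle1 V1 b_def by auto
  have agg: "is_aggregation n (hfa f a)"
    unfolding is_aggregation_def
  proof (intro conjI ballI impI)
    fix x assume x: "x \<in> cube n"
    show "hfa f a x \<in> {0..1}" using vals x fa by (cases "vle a x"; cases "x = replicate n 1") auto
  next
    fix x y assume x: "x \<in> cube n" and y: "y \<in> cube n" and xy: "vle x y"
    show "hfa f a x \<le> hfa f a y"
    proof (cases "vle a x")
      case False
      then show ?thesis using vals x y fa
        by (cases "vle a y"; cases "y = replicate n 1") auto
    next
      case True
      have ay: "vle a y" using True xy unfolding vle_def
        by (fastforce simp: list_all2_conv_all_nth intro: order_trans)
      show ?thesis
      proof (cases "y = replicate n 1")
        case True then show ?thesis using vals x y fa
          by (cases "x = replicate n 1") auto
      next
        case ny: False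
        have "x \<noteq> replicate n 1"
        proof
          assume "x = replicate n 1"
          then have "\<forall>i<n. 1 \<le> y ! i" using xy y
            by (auto simp: vle_def list_all2_conv_all_nth cube_def)
          moreover have "\<forall>i<n. y ! i \<le> 1" using y nth_mem by (fastforce simp: cube_def)
          ultimately have "y = replicate n 1" using y by (intro nth_equalityI) (force simp: cube_def)+
          then show False using ny by simp
        qed
        then show ?thesis using vals x y True ay ny by auto
      qed
    qed
  next
    show "hfa f a (replicate n 0) = 0" using vals zero_cube nvle0 by auto
  next
    show "hfa f a (replicate n 1) = 1" using vals one_cube by auto
  qed
  show ?thesis using agg vals by blast
qed

end
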